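(* Let $r\in\mathbb{N}_0$ and $I=[-1,1]$. (i) If $\lambda\in(-1,1)$, then there exists $f\in C^r(I)$ with $f\equiv0$ on $[-1,\lambda]$ such that there is no $g\in C^{r+1}(I)$ satisfying $g^{(i)}(\lambda)=f^{(i)}(\lambda)$ for $0\le i\le\tilde r$ and $g\ge f$ on $(\lambda-\varepsilon,\lambda+\varepsilon)$ for some $\varepsilon>0$, where $\tilde r:=2\lfloor r/2\rfloor$ (i.e. $\tilde r=r-1$ if $r$ is odd and $\tilde r=r$ if $r$ is even). (ii) If $\lambda=\pm1$, then there exists $f\in C^r(I)$ such that there is no $g\in C^{r+1}(I)$ satisfying $g^{(i)}(\lambda)=f^{(i)}(\lambda)$ for $0\le i\le r$ and $g\ge f$ on $(\lambda-\varepsilon,\lambda+\varepsilon)\cap I$ for some $\varepsilon>0$. *)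

theory Defs
  imports "HOL-Analysis.Analysis"
begin

abbreviation I :: "real set" where "I \<equiv> {-1..1}"

text \<open>So f is C^r on S with
  f^(i) = D i on S.\<close>
definition Cr_derivs :: "nat \<Rightarrow> real set \<Rightarrow> (real \<Rightarrow> real) \<Rightarrow> (nat \<Rightarrow> real \<Rightarrow> real) \<Rightarrow> bool" where
  "Cr_derivs r S f D \<longleftrightarrow>
     (\<forall>x\<in>S. D 0 x = f x) \<and>
     (\<forall>i<r. \<forall>x\<in>S. (D i has_real_derivative D (Suc i) x) (at x within S)) \<and>
     (\<forall>i\<le>r. continuous_on S (D i))"

end

theory Submission
  imports Defs
begin


definition q :: "real \<Rightarrow> real \<Rightarrow> real" where
  "q a t = (if t > 0 then t powr a else 0)"

lemma q_nonneg: "q a t \<ge> 0" by (simp add: q_def)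

lemma q_zero[simp]: "q a 0 = 0" by (simp add: q_def)

lemma q_cont: assumes "a > 0" shows "isCont (q a) t"
proof -
  have "q a = (\<lambda>t. (max t 0) powr a)"
    by (auto simp: q_def fun_eq_iff max_def)
  moreover have "isCont (\<lambda>t. (max t 0) powr a) t"
    unfolding isCont_def
    by (rule tendsto_powr') (auto intro!: tendsto_intros assms simp: isCont_def[symmetric])
  ultimately show ?thesis by simp
qed

lemma q_deriv: assumes "a > 1" shows "(q a has_real_derivative a * q (a - 1) t) (at t)"
proof (cases "t > 0")
  case True
  have "((\<lambda>z. z powr a) has_real_derivative a * t powr (a - 1)) (at t)"
    by (rule has_real_derivative_powr[OF True])
  then have "(q a has_real_derivative a * t powr (a - 1)) (at t)"
    by (rule has_field_derivative_transform_within_open[where S="{0<..}"])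
       (use True in \<open>auto simp: q_def\<close>)
  then show ?thesis using True by (simp add: q_def)
next
  case False
  show ?thesis
  proof (cases "t < 0")
    case True
    have "((\<lambda>z. 0) has_real_derivative 0) (at t)" by simp
    then have "(q a has_real_derivative 0) (at t)"
      by (rule has_field_derivative_transform_within_open[where S="{..<0}"])
         (use True in \<open>auto simp: q_def\<close>)
    then show ?thesis using True by (simp add: q_def)
  next
    case False
    with \<open>\<not> t > 0\<close> have t0: "t = 0" by simp
    have c: "isCont (q (a-1)) 0" using q_cont assms by simp
    have "(q (a - 1) \<longlongrightarrow> 0) (at 0)"
      using c by (simp add: isCont_def)
    moreover have "\<forall>\<^sub>F h in at 0. q (a-1) h = (q a (0 + h) - q a 0) / h"
      unfolding eventually_at_filter
      by (auto simp: q_def powr_diff)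
    ultimately have "((\<lambda>h. (q a (0 + h) - q a 0) / h) \<longlongrightarrow> 0) (at 0)"
      by (rule Lim_transform_eventually)
    then show ?thesis unfolding DERIV_def t0 by simp
  qed
qed

definition cc :: "nat \<Rightarrow> nat \<Rightarrow> real" where
  "cc r i = (\<Prod>j<i. (real r + 1/2 - real j))"

definition F :: "nat \<Rightarrow> real \<Rightarrow> real \<Rightarrow> nat \<Rightarrow> real \<Rightarrow> real" where
  "F r s l i x = s^i * cc r i * q (real r + 1/2 - real i) (s*(x-l))"

lemma F_deriv: assumes "i < r"
  shows "(F r s l i has_real_derivative F r s l (Suc i) x) (at x)"
proof -
  let ?a = "real r + 1/2 - real i"
  have a: "?a > 1" using assms by simp
  have d1: "((\<lambda>x. s*(x-l)) has_real_derivative s) (at x)"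
    by (auto intro!: derivative_eq_intros)
  have "((\<lambda>x. q ?a (s*(x-l))) has_real_derivative (?a * q (?a - 1) (s*(x-l))) * s) (at x)"
    by (rule DERIV_chain2[OF q_deriv[OF a] d1])
  then have "((\<lambda>x. s^i * cc r i * q ?a (s*(x-l))) has_real_derivative
      s^i * cc r i * ((?a * q (?a - 1) (s*(x-l))) * s)) (at x)"
    by (rule DERIV_cmult)
  moreover have "s^i * cc r i * ((?a * q (?a - 1) (s*(x-l))) * s) = F r s l (Suc i) x"
    by (simp add: F_def cc_def algebra_simps)
  moreover have "(\<lambda>x. s^i * cc r i * q ?a (s*(x-l))) = F r s l i" by (simp add: fun_eq_iff F_def)
  ultimately show ?thesis by metis
qed

lemma F_cont: assumes "i \<le> r" shows "isCont (F r s l i) x"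
proof -
  have a: "real r + 1/2 - real i > 0" using assms by simp
  have "isCont (\<lambda>x. q (real r + 1/2 - real i) (s*(x-l))) x"
    by (rule continuous_at_compose[OF _ q_cont[OF a], unfolded o_def]) (auto intro!: continuous_intros)
  then show ?thesis unfolding F_def by (auto intro!: continuous_intros)
qed

lemma Cr_F: "Cr_derivs r I (F r s l 0) (F r s l)"
  unfolding Cr_derivs_def
  by (auto intro!: has_field_derivative_at_within F_deriv continuous_at_imp_continuous_on F_cont)

lemma F_at_l: "F r s l i l = 0" by (simp add: F_def)

lemma F0: "F r s l 0 x = q (real r + 1/2) (s*(x-l))" by (simp add: F_def cc_def)

lemma mvt_D:
  assumes "\<forall>x\<in>{a..b}. (f has_real_derivative f' x) (at x within {a..b})"
    "u < v" "u \<in> {a..b}" "v \<in> {a..b}"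
  shows "\<exists>z\<in>{u<..<v}. f v - f u = f' z * (v - u)"
proof -
  have "\<exists>z\<in>{u<..<v}. f v - f u = (\<lambda>h. f' z * h) (v - u)"
  proof (rule mvt_simple[OF assms(2)])
    fix x assume "u \<le> x" "x \<le> v"
    then have "x \<in> {a..b}" "{u..v} \<subseteq> {a..b}" using assms(3,4) by auto
    then have "(f has_real_derivative f' x) (at x within {u..v})"
      using assms(1) DERIV_subset by blast
    then show "(f has_derivative (\<lambda>h. f' x * h)) (at x within {u..v})"
      by (simp add: has_field_derivative_def)
  qed
  then show ?thesis by simp
qed

lemma bound:
  fixes D :: "nat \<Rightarrow> real \<Rightarrow> real"
  assumes "\<forall>i<k. \<forall>x\<in>{a..b}. (D i has_real_derivative D (Suc i) x) (at x within {a..b})"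
    "\<forall>i<k. D i l = 0" "l \<in> {a..b}" "\<forall>x\<in>{a..b}. \<bar>D k x\<bar> \<le> M"
  shows "\<forall>x\<in>{a..b}. \<bar>D 0 x\<bar> \<le> M * \<bar>x - l\<bar>^k"
  using assms
proof (induction k arbitrary: D)
  case 0 then show ?case by simp
next
  case (Suc k)
  have IH: "\<forall>x\<in>{a..b}. \<bar>D 1 x\<bar> \<le> M * \<bar>x-l\<bar>^k"
    using Suc.IH[of "\<lambda>i. D (Suc i)"] Suc.prems by auto
  have d0: "\<forall>x\<in>{a..b}. (D 0 has_real_derivative D 1 x) (at x within {a..b})"
    using Suc.prems(1) by auto
  show ?case
  proof
    fix x assume x: "x \<in> {a..b}"
    have M0: "M \<ge> 0" using Suc.prems(4) x by (meson abs_ge_zero order_trans)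
    consider "x = l" | "l < x" | "x < l" by linarith
    then show "\<bar>D 0 x\<bar> \<le> M * \<bar>x-l\<bar>^Suc k"
    proof cases
      case 1 then show ?thesis using Suc.prems(2) by simp
    next
      case 2
      obtain z where z: "z \<in> {l<..<x}" "D 0 x - D 0 l = D 1 z * (x - l)"
        using mvt_D[OF d0 2 Suc.prems(3) x] by blast
      have za: "z \<in> {a..b}" using z x Suc.prems(3) by auto
      have "\<bar>D 0 x\<bar> = \<bar>D 1 z\<bar> * (x-l)" using z Suc.prems(2) 2 by (simp add: abs_mult)
      also have "\<dots> \<le> M * \<bar>z-l\<bar>^k * (x-l)" using IH za 2 by (simp add: mult_right_mono)
      also have "\<dots> \<le> M * \<bar>x-l\<bar>^k * (x-l)"
        using z 2 M0 by (intro mult_right_mono mult_left_mono power_mono) auto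
      finally show ?thesis using 2 by (simp add: mult_ac)
    next
      case 3
      obtain z where z: "z \<in> {x<..<l}" "D 0 l - D 0 x = D 1 z * (l - x)"
        using mvt_D[OF d0 3 x Suc.prems(3)] by blast
      have za: "z \<in> {a..b}" using z x Suc.prems(3) by auto
      have e: "D 0 x = -(D 1 z * (l - x))" using z Suc.prems(2) by simp
      have "\<bar>D 0 x\<bar> = \<bar>D 1 z\<bar> * (l-x)" using 3 by (simp add: e abs_mult)
      also have "\<dots> \<le> M * \<bar>z-l\<bar>^k * (l-x)" using IH za 3 by (simp add: mult_right_mono)
      also have "\<dots> \<le> M * \<bar>x-l\<bar>^k * (l-x)"
        using z 3 M0 by (intro mult_right_mono mult_left_mono power_mono) auto
      finally show ?thesis using 3 by (simp add: mult_ac)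
    qed
  qed
qed

lemma sign_right:
  fixes D :: "nat \<Rightarrow> real \<Rightarrow> real"
  assumes "\<forall>i<k. \<forall>x\<in>{a..b}. (D i has_real_derivative D (Suc i) x) (at x within {a..b})"
    "\<forall>i<k. D i l = 0" "l \<in> {a..b}" "\<forall>x\<in>{l<..b}. D k x > 0"
  shows "\<forall>x\<in>{l<..b}. D 0 x > 0"
  using assms
proof (induction k arbitrary: D)
  case 0 then show ?case by simp
next
  case (Suc k)
  have IH: "\<forall>x\<in>{l<..b}. D 1 x > 0"
    using Suc.IH[of "\<lambda>i. D (Suc i)"] Suc.prems by auto
  have d0: "\<forall>x\<in>{a..b}. (D 0 has_real_derivative D 1 x) (at x within {a..b})"
    using Suc.prems(1) by auto
  show ?case
  proof
    fix x assume x: "x \<in> {l<..b}"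
    then have 2: "l < x" and xa: "x \<in> {a..b}" using Suc.prems(3) by auto
    obtain z where z: "z \<in> {l<..<x}" "D 0 x - D 0 l = D 1 z * (x - l)"
      using mvt_D[OF d0 2 Suc.prems(3) xa] by blast
    have "D 1 z > 0" using IH z x by auto
    then show "D 0 x > 0" using z Suc.prems(2) 2 by simp
  qed
qed

lemma sign_left:
  fixes D :: "nat \<Rightarrow> real \<Rightarrow> real"
  assumes "\<forall>i<k. \<forall>x\<in>{a..b}. (D i has_real_derivative D (Suc i) x) (at x within {a..b})"
    "\<forall>i<k. D i l = 0" "l \<in> {a..b}" "\<forall>x\<in>{a..<l}. D k x > 0"
  shows "\<forall>x\<in>{a..<l}. (-1)^k * D 0 x > 0"
  using assms
proof (induction k arbitrary: D)
  case 0 then show ?case by simp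
next
  case (Suc k)
  have IH: "\<forall>x\<in>{a..<l}. (-1)^k * D 1 x > 0"
    using Suc.IH[of "\<lambda>i. D (Suc i)"] Suc.prems by auto
  have d0: "\<forall>x\<in>{a..b}. (D 0 has_real_derivative D 1 x) (at x within {a..b})"
    using Suc.prems(1) by auto
  show ?case
  proof
    fix x assume x: "x \<in> {a..<l}"
    then have 3: "x < l" and xa: "x \<in> {a..b}" using Suc.prems(3) by auto
    obtain z where z: "z \<in> {x<..<l}" "D 0 l - D 0 x = D 1 z * (l - x)"
      using mvt_D[OF d0 3 xa Suc.prems(3)] by blast
    have "(-1)^k * D 1 z > 0" using IH z x by auto
    then have "(-1)^k * D 1 z * (l - x) > 0" using 3 by simp
    moreover have "(-1)^Suc k * D 0 x = (-1)^k * D 1 z * (l - x)"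
    proof -
      have e: "D 0 x = -(D 1 z * (l - x))" using z Suc.prems(2) by simp
      show ?thesis by (simp add: e)
    qed
    ultimately show "(-1)^Suc k * D 0 x > 0" by simp
  qed
qed

lemma small_ineq:
  fixes M t :: real
  assumes "M \<ge> 0" "t > 0" "t \<le> 1/(M+1)^2"
  shows "M * t^(Suc r) < t powr (real r + 1/2)"
proof -
  have st: "sqrt t > 0" using assms by simp
  have "sqrt t \<le> sqrt (1/(M+1)^2)" using assms(3) by (simp only: real_sqrt_le_iff)
  also have "\<dots> = 1/(M+1)" using assms(1) by (simp add: real_sqrt_divide)
  finally have "sqrt t \<le> 1/(M+1)" .
  then have "M * sqrt t \<le> M/(M+1)" using assms(1)
    by (metis mult_left_mono times_divide_eq_right mult_1_right)
  also have "\<dots> < 1" using assms(1) by simp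
  finally have m: "M * sqrt t < 1" .
  have "M * t = (M * sqrt t) * sqrt t" using assms(2) by (simp add: mult.assoc)
  also have "\<dots> < sqrt t" using m st by simp
  finally have "M * t < sqrt t" .
  then have "t^r * (M * t) < t^r * sqrt t" using assms(2) by simp
  moreover have "t powr (real r + 1/2) = t^r * sqrt t"
    using assms(2) by (simp add: powr_add powr_realpow powr_half_sqrt)
  ultimately show ?thesis by (simp add: algebra_simps)
qed

lemma key:
  assumes s: "s = 1 \<or> s = -1" and g: "Cr_derivs (Suc r) I g Dg"
    and z: "\<forall>i\<le>r. Dg i l = 0" and e: "\<epsilon> > 0"
    and ge: "\<forall>x\<in>{l-\<epsilon><..<l+\<epsilon>} \<inter> I. g x \<ge> F r s l 0 x"
    and l: "l \<in> I" and t0: "l + s*t0 \<in> I" "t0 > 0"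
  shows False
proof -
  have "continuous_on I (Dg (Suc r))" using g by (simp add: Cr_derivs_def)
  then obtain M where M: "M \<ge> 0" "\<And>x. x \<in> I \<Longrightarrow> norm (Dg (Suc r) x) \<le> M"
    using continuous_on_compact_bound[of I "Dg (Suc r)"] by blast
  have bd: "\<forall>x\<in>I. \<bar>Dg 0 x\<bar> \<le> M * \<bar>x - l\<bar>^Suc r"
    by (rule bound) (use g z l M in \<open>auto simp: Cr_derivs_def\<close>)
  define t where "t = min (min (\<epsilon>/2) t0) (1/(M+1)^2)"
  have tpos: "t > 0" using e t0 M by (simp add: t_def)
  have tle: "t \<le> 1/(M+1)^2" "t < \<epsilon>" "t \<le> t0" using e by (auto simp: t_def)
  define x where "x = l + s*t"
  have xI: "x \<in> I" using s l t0 tpos tle by (auto simp: x_def)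
  have xl: "\<bar>x - l\<bar> = t" using s tpos by (auto simp: x_def)
  have xe: "x \<in> {l-\<epsilon><..<l+\<epsilon>}" using xl tle by auto
  have "F r s l 0 x = t powr (real r + 1/2)"
    using s tpos by (auto simp: F0 x_def q_def)
  moreover have "g x = Dg 0 x" using g xI by (simp add: Cr_derivs_def)
  ultimately have "t powr (real r + 1/2) \<le> M * t^Suc r"
    using ge xI xe bd xl by force
  then show False using small_ineq[OF M(1) tpos tle(1), of r] by simp
qed

lemma part1:
  fixes r :: nat and l :: real
  assumes l: "-1 < l" "l < 1"
  shows "\<exists>f Df. Cr_derivs r I f Df \<and> (\<forall>x\<in>{-1..l}. f x = 0) \<and>
              \<not> (\<exists>g Dg \<epsilon>. Cr_derivs (Suc r) I g Dg \<and>
                     (\<forall>i\<le>2 * (r div 2). Dg i l = Df i l) \<and> \<epsilon> > 0 \<and>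
                     (\<forall>x\<in>{l-\<epsilon><..<l+\<epsilon>} \<inter> I. g x \<ge> f x))"
proof (intro exI conjI)
  show "Cr_derivs r I (F r 1 l 0) (F r 1 l)" by (rule Cr_F)
  show "\<forall>x\<in>{-1..l}. F r 1 l 0 x = 0" by (auto simp: F0 q_def)
  show "\<not> (\<exists>g Dg \<epsilon>. Cr_derivs (Suc r) I g Dg \<and>
                     (\<forall>i\<le>2 * (r div 2). Dg i l = F r 1 l i l) \<and> \<epsilon> > 0 \<and>
                     (\<forall>x\<in>{l-\<epsilon><..<l+\<epsilon>} \<inter> I. g x \<ge> F r 1 l 0 x))"
  proof
    assume "\<exists>g Dg \<epsilon>. Cr_derivs (Suc r) I g Dg \<and>
                     (\<forall>i\<le>2 * (r div 2). Dg i l = F r 1 l i l) \<and> \<epsilon> > 0 \<and>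
                     (\<forall>x\<in>{l-\<epsilon><..<l+\<epsilon>} \<inter> I. g x \<ge> F r 1 l 0 x)"
    then obtain g Dg \<epsilon> where g: "Cr_derivs (Suc r) I g Dg"
      and z0: "\<forall>i\<le>2 * (r div 2). Dg i l = 0" and e: "\<epsilon> > 0"
      and ge: "\<forall>x\<in>{l-\<epsilon><..<l+\<epsilon>} \<inter> I. g x \<ge> F r 1 l 0 x"
      by (auto simp: F_at_l)
    have gd: "\<forall>i<Suc r. \<forall>x\<in>I. (Dg i has_real_derivative Dg (Suc i) x) (at x within I)"
      and g0: "\<forall>x\<in>I. Dg 0 x = g x"
      and gc: "\<forall>i\<le>Suc r. continuous_on I (Dg i)"
      using g by (auto simp: Cr_derivs_def)
    have zall: "\<forall>i\<le>r. Dg i l = 0"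
    proof (cases "even r")
      case True
      then have "2 * (r div 2) = r" by simp
      then show ?thesis using z0 by simp
    next
      case odd: False
      have zlt: "\<forall>i<r. Dg i l = 0" using z0 odd
        by (metis Suc_leI odd_two_times_div_two_succ add.commute plus_1_eq_Suc le_simps(2) nat_less_le)
      have "Dg r l = 0"
      proof (rule ccontr)
        assume cne: "Dg r l \<noteq> 0"
        define c where "c = Dg r l"
        have "continuous_on I (Dg r)" using gc by simp
        then obtain d where d: "d > 0" "\<forall>x\<in>I. dist x l < d \<longrightarrow> dist (Dg r x) (Dg r l) < \<bar>c\<bar>"
        proof -
          have "\<bar>c\<bar> > 0" using cne by (simp add: c_def)
          moreover have "l \<in> I" using l by auto
          ultimately show ?thesis using that \<open>continuous_on I (Dg r)\<close> unfolding continuous_on_iff by blast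
        qed
        define h where "h = min d \<epsilon> / 2"
        have h: "h > 0" "h < d" "h < \<epsilon>" using d e by (auto simp: h_def)
        define a where "a = max (-1) (l - h)"
        define b where "b = min 1 (l + h)"
        have ab: "a < l" "l < b" "{a..b} \<subseteq> I" "l \<in> {a..b}" using l h by (auto simp: a_def b_def)
        have abd: "\<forall>x\<in>{a..b}. \<bar>x - l\<bar> < d" using h by (auto simp: a_def b_def)
        have sg: "\<forall>x\<in>{a..b}. \<bar>Dg r x - c\<bar> < \<bar>c\<bar>"
          using d(2) abd ab(3) by (auto simp: dist_real_def c_def)
        have dab: "\<forall>i<r. \<forall>x\<in>{a..b}. (Dg i has_real_derivative Dg (Suc i) x) (at x within {a..b})"
          using gd ab(3) by (meson DERIV_subset less_SucI subsetD)
        have aI: "a \<in> {l-\<epsilon><..<l+\<epsilon>} \<inter> I" and bI: "b \<in> {l-\<epsilon><..<l+\<epsilon>} \<inter> I"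
          using h l by (auto simp: a_def b_def)
        have ga: "Dg 0 a \<ge> 0"
        proof -
          have "F r 1 l 0 a \<le> g a" using ge aI by blast
          moreover have "F r 1 l 0 a \<ge> 0" by (simp add: F0 q_nonneg)
          moreover have "g a = Dg 0 a" using g0 aI by auto
          ultimately show ?thesis by simp
        qed
        have gb: "Dg 0 b \<ge> 0"
        proof -
          have "F r 1 l 0 b \<le> g b" using ge bI by blast
          moreover have "F r 1 l 0 b \<ge> 0" by (simp add: F0 q_nonneg)
          moreover have "g b = Dg 0 b" using g0 bI by auto
          ultimately show ?thesis by simp
        qed
        show False
        proof (cases "c > 0")
          case True
          have pos: "\<forall>x\<in>{a..<l}. Dg r x > 0"
          proof (intro ballI)
            fix x assume "x \<in> {a..<l}"
            then have "x \<in> {a..b}" using ab by auto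
            then have "\<bar>Dg r x - c\<bar> < \<bar>c\<bar>" using sg by blast
            then show "Dg r x > 0" using True by (simp add: abs_less_iff)
          qed
          have "\<forall>x\<in>{a..<l}. (-1)^r * Dg 0 x > 0"
            by (rule sign_left[OF dab zlt ab(4) pos])
          then have "(-1)^r * Dg 0 a > 0" using ab by auto
          then show False using odd ga by simp
        next
          case False
          then have cneg: "c < 0" using cne c_def by simp
          have pos: "\<forall>x\<in>{l<..b}. (\<lambda>i x. - Dg i x) r x > 0"
          proof (intro ballI)
            fix x assume "x \<in> {l<..b}"
            then have "x \<in> {a..b}" using ab by auto
            then have "\<bar>Dg r x - c\<bar> < \<bar>c\<bar>" using sg by blast
            then show "(\<lambda>i x. - Dg i x) r x > 0" using cneg by (simp add: abs_less_iff)
          qed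
          have dab': "\<forall>i<r. \<forall>x\<in>{a..b}. ((\<lambda>i x. - Dg i x) i has_real_derivative (\<lambda>i x. - Dg i x) (Suc i) x) (at x within {a..b})"
            using dab by (auto intro: DERIV_minus)
          have "\<forall>x\<in>{l<..b}. (\<lambda>i x. - Dg i x) 0 x > 0"
            by (rule sign_right[OF dab' _ ab(4) pos]) (use zlt in auto)
          then have "- Dg 0 b > 0" using ab by auto
          then show False using gb by simp
        qed
      qed
      then show ?thesis using zlt by (metis le_neq_implies_less)
    qed
    show False
      by (rule key[of 1 r g Dg l \<epsilon> "1 - l"]) (use g zall e ge l in auto)
  qed
qed

lemma part2:
  fixes r :: nat and l :: real
  assumes l: "l = 1 \<or> l = -1"
  shows "\<exists>f Df. Cr_derivs r I f Df \<and>
              \<not> (\<exists>g Dg \<epsilon>. Cr_derivs (Suc r) I g Dg \<and>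
                     (\<forall>i\<le>r. Dg i l = Df i l) \<and> \<epsilon> > 0 \<and>
                     (\<forall>x\<in>{l-\<epsilon><..<l+\<epsilon>} \<inter> I. g x \<ge> f x))"
proof -
  define s :: real where "s = (if l = 1 then -1 else 1)"
  have s: "s = 1 \<or> s = -1" by (simp add: s_def)
  have t0: "l + s * 2 \<in> I" using l by (auto simp: s_def)
  have lI: "l \<in> I" using l by auto
  show ?thesis
  proof (intro exI conjI)
    show "Cr_derivs r I (F r s l 0) (F r s l)" by (rule Cr_F)
    show "\<not> (\<exists>g Dg \<epsilon>. Cr_derivs (Suc r) I g Dg \<and>
                     (\<forall>i\<le>r. Dg i l = F r s l i l) \<and> \<epsilon> > 0 \<and>
                     (\<forall>x\<in>{l-\<epsilon><..<l+\<epsilon>} \<inter> I. g x \<ge> F r s l 0 x))"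
    proof
      assume "\<exists>g Dg \<epsilon>. Cr_derivs (Suc r) I g Dg \<and>
                     (\<forall>i\<le>r. Dg i l = F r s l i l) \<and> \<epsilon> > 0 \<and>
                     (\<forall>x\<in>{l-\<epsilon><..<l+\<epsilon>} \<inter> I. g x \<ge> F r s l 0 x)"
      then obtain g Dg \<epsilon> where "Cr_derivs (Suc r) I g Dg" "\<forall>i\<le>r. Dg i l = 0" "\<epsilon> > 0"
        "\<forall>x\<in>{l-\<epsilon><..<l+\<epsilon>} \<inter> I. g x \<ge> F r s l 0 x"
        by (auto simp: F_at_l)
      then show False using key[OF s _ _ _ _ lI t0] by simp
    qed
  qed
qed



theorem lemma3p1:
  fixes r :: nat
  shows "(\<forall>l::real. -1 < l \<and> l < 1 \<longrightarrow>
           (\<exists>f Df. Cr_derivs r I f Df \<and> (\<forall>x\<in>{-1..l}. f x = 0) \<and>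
              \<not> (\<exists>g Dg \<epsilon>. Cr_derivs (Suc r) I g Dg \<and>
                     (\<forall>i\<le>2 * (r div 2). Dg i l = Df i l) \<and> \<epsilon> > 0 \<and>
                     (\<forall>x\<in>{l-\<epsilon><..<l+\<epsilon>} \<inter> I. g x \<ge> f x))))
       \<and> (\<forall>l::real. l = 1 \<or> l = -1 \<longrightarrow>
           (\<exists>f Df. Cr_derivs r I f Df \<and>
              \<not> (\<exists>g Dg \<epsilon>. Cr_derivs (Suc r) I g Dg \<and>
                     (\<forall>i\<le>r. Dg i l = Df i l) \<and> \<epsilon> > 0 \<and>
                     (\<forall>x\<in>{l-\<epsilon><..<l+\<epsilon>} \<inter> I. g x \<ge> f x))))"
  using part1 part2 by blast

end
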